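(* Let $q\ge1$, $M>0$, $\alpha=2^{q+1}+8$, and let $\{J_i\}_{i=1}^m$ be an assignment satisfying $\mathbb{E}\big[(\sum_{i=1}^m(\sum_{j\in J_i}Y_j)^q)^{1/q}\big]\le M$. Then $\sum_{j=1}^n\mathbb{E}[(Y'_j)^q]\le\alpha M^q$.
   Context: Nonnegative random variables $X_{ij}$ (size of job $j$ on machine $i$), with $X_{ij}$ and $X_{i'j'}$ independent whenever $j\ne j'$. For an assignment $\{J_i\}$ (partition of $[n]$), $Y_j:=X_{ij}$ where $j\in J_i$ (so the $Y_j$ are independent). Truncated part $Y'_j:=Y_j\mathbf{1}[Y_j\le M]$. *)

theory Defs
  imports "HOL-Probability.Probability"
begin

text \<open>An assignment of jobs 1..n to machines 1..m: a partition of {1..n}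
  into sets J 1, ..., J m (some possibly empty).\<close>
definition is_assignment :: "nat \<Rightarrow> nat \<Rightarrow> (nat \<Rightarrow> nat set) \<Rightarrow> bool" where
  "is_assignment m n J \<longleftrightarrow>
     (\<forall>i\<in>{1..m}. J i \<subseteq> {1..n}) \<and>
     (\<forall>j\<in>{1..n}. \<exists>!i. i \<in> {1..m} \<and> j \<in> J i)"

definition machine_of :: "nat \<Rightarrow> (nat \<Rightarrow> nat set) \<Rightarrow> nat \<Rightarrow> nat" where
  "machine_of m J j = (THE i. i \<in> {1..m} \<and> j \<in> J i)"

definition Yv :: "(nat \<Rightarrow> nat \<Rightarrow> 'a \<Rightarrow> real) \<Rightarrow> nat \<Rightarrow> (nat \<Rightarrow> nat set) \<Rightarrow> nat \<Rightarrow> 'a \<Rightarrow> real" where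
  "Yv X m J j \<omega> = X (machine_of m J j) j \<omega>"

definition Ytr :: "(nat \<Rightarrow> nat \<Rightarrow> 'a \<Rightarrow> real) \<Rightarrow> nat \<Rightarrow> (nat \<Rightarrow> nat set) \<Rightarrow> real \<Rightarrow> nat \<Rightarrow> 'a \<Rightarrow> real" where
  "Ytr X m J M j \<omega> = (if Yv X m J j \<omega> \<le> M then Yv X m J j \<omega> else 0)"

end

theory Submission
  imports Defs
begin


lemma powr_superadd: fixes a b q :: real assumes "0 \<le> a" "0 \<le> b" "q \<ge> 1"
  shows "a powr q + b powr q \<le> (a+b) powr q"
proof (cases "a + b = 0")
  case True then have "a = 0" "b = 0" using assms by auto
  then show ?thesis using assms by simp
next
  case False
  have h: "x powr q \<le> x * (a+b) powr (q-1)" if "0 \<le> x" "x \<le> a+b" for x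
  proof (cases "x = 0")
    case True then show ?thesis using assms by simp
  next
    case False
    then have "x powr q = x * x powr (q-1)" using that by (simp add: powr_mult_base)
    also have "\<dots> \<le> x * (a+b) powr (q-1)" by (intro mult_left_mono powr_mono2) (use that assms in auto)
    finally show ?thesis .
  qed
  have "a powr q + b powr q \<le> a * (a+b) powr (q-1) + b * (a+b) powr (q-1)"
    using h[of a] h[of b] assms by auto
  also have "\<dots> = (a+b) * (a+b) powr (q-1)" by (simp add: algebra_simps)
  also have "\<dots> = (a+b) powr q" using False assms by (simp add: powr_mult_base)
  finally show ?thesis .
qed

lemma powr_sum_le: fixes a :: "nat \<Rightarrow> real" and q :: real
  assumes "finite A" "\<And>j. j \<in> A \<Longrightarrow> 0 \<le> a j" "q \<ge> 1"
  shows "(\<Sum>j\<in>A. a j powr q) \<le> (\<Sum>j\<in>A. a j) powr q"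
  using assms
proof (induction A rule: finite_induct)
  case empty then show ?case by simp
next
  case (insert x A)
  have "(\<Sum>j\<in>insert x A. a j powr q) = a x powr q + (\<Sum>j\<in>A. a j powr q)" using insert by simp
  also have "\<dots> \<le> a x powr q + (\<Sum>j\<in>A. a j) powr q" using insert by auto
  also have "\<dots> \<le> (a x + (\<Sum>j\<in>A. a j)) powr q"
    by (rule powr_superadd) (use insert in \<open>auto intro: sum_nonneg\<close>)
  finally show ?case using insert by simp
qed

lemma asg_machine:
  assumes "is_assignment m n J" "j \<in> {1..n}"
  shows "machine_of m J j \<in> {1..m} \<and> j \<in> J (machine_of m J j)"
proof -
  have "\<exists>!i. i \<in> {1..m} \<and> j \<in> J i" using assms unfolding is_assignment_def by auto
  then show ?thesis unfolding machine_of_def by (rule theI')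
qed

lemma asg_machine_eq:
  assumes "is_assignment m n J" "i \<in> {1..m}" "j \<in> J i"
  shows "j \<in> {1..n} \<and> machine_of m J j = i"
proof -
  have jn: "j \<in> {1..n}" using assms unfolding is_assignment_def by blast
  have "\<exists>!i. i \<in> {1..m} \<and> j \<in> J i" using assms jn unfolding is_assignment_def by auto
  then have "machine_of m J j = i" unfolding machine_of_def using assms by (auto intro: the1_equality)
  with jn show ?thesis by simp
qed

lemma asg_sum:
  assumes "is_assignment m n J"
  shows "(\<Sum>j\<in>{1..n}. g j) = (\<Sum>i\<in>{1..m}. \<Sum>j\<in>J i. g j)"
proof -
  have U: "{1..n} = (\<Union>i\<in>{1..m}. J i)"
    using assms asg_machine[OF assms] unfolding is_assignment_def by blast
  have fin: "\<forall>i\<in>{1..m}. finite (J i)"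
    using assms unfolding is_assignment_def by (auto intro: finite_subset)
  have disj: "\<forall>i\<in>{1..m}. \<forall>k\<in>{1..m}. i \<noteq> k \<longrightarrow> J i \<inter> J k = {}"
    using asg_machine_eq[OF assms] by blast
  show ?thesis unfolding U by (rule sum.UNION_disjoint[OF _ fin disj]) simp
qed

lemma powr_le_1_plus: fixes x q :: real assumes "0 \<le> x" "q \<ge> 1" shows "x powr (1/q) \<le> 1 + x"
  by (smt (verit) assms(1,2) div_by_1 le_divide_eq_1_pos powr_mono
    powr_mono2 powr_one_gt_zero_iff zero_le_divide_1_iff)

lemma powr_inv_le: fixes a b q :: real assumes "0 < a" "0 < b" "q \<ge> 1" "a powr (1/q) \<le> b" shows "a \<le> b powr q"
proof -
  have "a = (a powr (1/q)) powr q" using assms by (simp add: powr_powr)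
  also have "\<dots> \<le> b powr q" by (rule powr_mono2) (use assms in auto)
  finally show ?thesis .
qed

lemma pointwise_conc: fixes s \<mu> q :: real assumes "0 \<le> s" "\<mu> > 0" "q \<ge> 1"
  shows "(\<mu>/2) powr (1/q) * (1 - (s - \<mu>)^2 * (4/\<mu>^2)) \<le> s powr (1/q)"
proof (cases "\<bar>s - \<mu>\<bar> \<ge> \<mu>/2")
  case True
  then have "(\<mu>/2)^2 \<le> (s-\<mu>)^2" by (metis abs_le_square_iff abs_of_pos assms(2) half_gt_zero)
  then have "1 \<le> (s - \<mu>)^2 * (4/\<mu>^2)" using assms by (simp add: field_simps power2_eq_square)
  then have "(\<mu>/2) powr (1/q) * (1 - (s - \<mu>)^2 * (4/\<mu>^2)) \<le> 0"
    by (simp add: mult_nonneg_nonpos)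
  then show ?thesis by (smt (verit) powr_ge_zero)
next
  case False
  then have "\<mu>/2 \<le> s" by (auto simp: abs_if split: if_splits)
  then have "(\<mu>/2) powr (1/q) \<le> s powr (1/q)" by (intro powr_mono2) (use assms in auto)
  moreover have "1 - (s - \<mu>)^2 * (4/\<mu>^2) \<le> 1" using assms by simp
  ultimately show ?thesis
    by (smt (verit) mult_left_le powr_ge_zero)
qed

lemma (in prob_space) second_moment_sum:
  fixes w :: "nat \<Rightarrow> 'a \<Rightarrow> real"
  assumes "finite I" "indep_vars (\<lambda>_. borel) w I"
   "\<And>i \<omega>. i\<in>I \<Longrightarrow> \<omega>\<in>space M \<Longrightarrow> 0 \<le> w i \<omega> \<and> w i \<omega> \<le> 1"
  shows "expectation (\<lambda>\<omega>. (\<Sum>i\<in>I. w i \<omega>)^2) \<le> (\<Sum>i\<in>I. expectation (w i))^2 + (\<Sum>i\<in>I. expectation (w i))"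
  using assms
proof (induction I rule: finite_induct)
  case empty
  then show ?case by simp
next
  case (insert i I)
  have indI: "indep_vars (\<lambda>_. borel) w I"
    using insert.prems(1) by (rule indep_vars_subset) auto
  have mw: "\<And>k. k \<in> insert i I \<Longrightarrow> w k \<in> borel_measurable M"
    using insert.prems(1) by (auto simp: indep_vars_def)
  have bI: "\<And>k \<omega>. k\<in>I \<Longrightarrow> \<omega>\<in>space M \<Longrightarrow> 0 \<le> w k \<omega> \<and> w k \<omega> \<le> 1"
    using insert.prems(2) by auto
  note IH = insert.IH[OF indI bI]
  define S where "S = (\<lambda>\<omega>. \<Sum>k\<in>I. w k \<omega>)"
  define m where "m = expectation (w i)"
  define \<mu> where "\<mu> = (\<Sum>k\<in>I. expectation (w k))"
  have mS[measurable]: "S \<in> borel_measurable M" unfolding S_def using mw by auto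
  have mwi[measurable]: "w i \<in> borel_measurable M" using mw by auto
  have Sb: "\<And>\<omega>. \<omega>\<in>space M \<Longrightarrow> 0 \<le> S \<omega> \<and> S \<omega> \<le> real (card I)"
  proof -
    fix \<omega> assume "\<omega>\<in>space M"
    then have "\<forall>k\<in>I. 0 \<le> w k \<omega> \<and> w k \<omega> \<le> 1" using insert.prems(2) by auto
    then show "0 \<le> S \<omega> \<and> S \<omega> \<le> real (card I)" unfolding S_def
      using sum_nonneg[of I "\<lambda>k. w k \<omega>"] sum_mono[of I "\<lambda>k. w k \<omega>" "\<lambda>_. 1"] by auto
  qed
  have wb: "\<And>\<omega>. \<omega>\<in>space M \<Longrightarrow> 0 \<le> w i \<omega> \<and> w i \<omega> \<le> 1" using insert.prems(2) by auto
  have iw: "integrable M (w i)"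
    by (rule integrable_const_bound[where B=1]) (auto simp: wb abs_le_iff intro!: AE_I2 dest: wb)
  have iw2: "integrable M (\<lambda>\<omega>. (w i \<omega>)^2)"
    by (rule integrable_const_bound[where B=1]) (auto intro!: AE_I2 simp: abs_le_iff power_le_one dest: wb)
  have iS: "integrable M S"
    by (rule integrable_const_bound[where B="real (card I)"]) (auto intro!: AE_I2 dest: Sb)
  have iS2: "integrable M (\<lambda>\<omega>. (S \<omega>)^2)"
    by (rule integrable_const_bound[where B="real (card I)^2"]) (auto intro!: AE_I2 power_mono dest: Sb)
  have ind2: "indep_var borel (w i) borel S"
    unfolding S_def by (rule indep_vars_sum) (use insert in auto)
  have iwS: "integrable M (\<lambda>\<omega>. w i \<omega> * S \<omega>)"
    using indep_var_integrable[OF ind2 iw iS] .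
  have iwk: "integrable M (w k)" if "k \<in> I" for k
    by (rule integrable_const_bound[where B=1]) (use insert.prems(2) mw that in \<open>auto simp: abs_le_iff intro!: AE_I2\<close>)
  have "expectation S = \<mu>" unfolding S_def \<mu>_def using iwk by (simp add: Bochner_Integration.integral_sum)
  then have EwS: "expectation (\<lambda>\<omega>. w i \<omega> * S \<omega>) = m * \<mu>"
    using indep_var_lebesgue_integral[OF ind2 iw iS] unfolding m_def by simp
  have "expectation (\<lambda>\<omega>. (\<Sum>k\<in>insert i I. w k \<omega>)^2)
      = expectation (\<lambda>\<omega>. (w i \<omega>)^2 + 2 * (w i \<omega> * S \<omega>) + (S \<omega>)^2)"
    using insert.hyps by (simp add: S_def power2_sum algebra_simps)
  also have "\<dots> = expectation (\<lambda>\<omega>. (w i \<omega>)^2) + 2 * expectation (\<lambda>\<omega>. w i \<omega> * S \<omega>) + expectation (\<lambda>\<omega>. (S \<omega>)^2)"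
    using iw2 iwS iS2 by simp
  also have "expectation (\<lambda>\<omega>. (w i \<omega>)^2) \<le> m"
    unfolding m_def by (rule integral_mono[OF iw2 iw]) (auto simp: power2_eq_square, metis wb mult_left_le)
  also have "expectation (\<lambda>\<omega>. (S \<omega>)^2) \<le> \<mu>^2 + \<mu>" using IH unfolding S_def \<mu>_def .
  finally have "expectation (\<lambda>\<omega>. (\<Sum>k\<in>insert i I. w k \<omega>)^2) \<le> m + 2 * (m * \<mu>) + (\<mu>^2 + \<mu>)"
    using EwS by simp
  moreover have eqs: "(\<Sum>k\<in>insert i I. expectation (w k)) = m + \<mu>" using insert.hyps by (simp add: m_def \<mu>_def)
  moreover have "m + 2 * (m * \<mu>) + (\<mu>^2 + \<mu>) \<le> (m+\<mu>)^2 + (m+\<mu>)"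
    by (simp add: power2_sum)
  ultimately show ?case unfolding eqs by linarith
qed

lemma (in prob_space) key_bound:
  fixes w :: "nat \<Rightarrow> 'a \<Rightarrow> real" and q :: real
  assumes fin: "finite I" and ind: "indep_vars (\<lambda>_. borel) w I"
   and wb: "\<And>i \<omega>. i\<in>I \<Longrightarrow> \<omega>\<in>space M \<Longrightarrow> 0 \<le> w i \<omega> \<and> w i \<omega> \<le> 1"
   and q: "q \<ge> 1"
   and E1: "expectation (\<lambda>\<omega>. (\<Sum>i\<in>I. w i \<omega>) powr (1/q)) \<le> 1"
  shows "(\<Sum>i\<in>I. expectation (w i)) \<le> 2 powr (q+1) + 8"
proof -
  define S where "S = (\<lambda>\<omega>. \<Sum>i\<in>I. w i \<omega>)"
  define \<mu> where "\<mu> = (\<Sum>i\<in>I. expectation (w i))"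
  have mw[measurable]: "\<And>k. k \<in> I \<Longrightarrow> w k \<in> borel_measurable M"
    using ind by (auto simp: indep_vars_def)
  have mS[measurable]: "S \<in> borel_measurable M" unfolding S_def using mw by auto
  have Sb: "\<And>\<omega>. \<omega>\<in>space M \<Longrightarrow> 0 \<le> S \<omega> \<and> S \<omega> \<le> real (card I)"
  proof -
    fix \<omega> assume "\<omega>\<in>space M"
    then have "\<forall>k\<in>I. 0 \<le> w k \<omega> \<and> w k \<omega> \<le> 1" using wb by auto
    then show "0 \<le> S \<omega> \<and> S \<omega> \<le> real (card I)" unfolding S_def
      using sum_nonneg[of I "\<lambda>k. w k \<omega>"] sum_mono[of I "\<lambda>k. w k \<omega>" "\<lambda>_. 1"] by auto
  qed
  have iwk: "integrable M (w k)" if "k \<in> I" for k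
    by (rule integrable_const_bound[where B=1]) (use wb mw that in \<open>auto simp: abs_le_iff intro!: AE_I2\<close>)
  have ES: "expectation S = \<mu>" unfolding S_def \<mu>_def using iwk by (simp add: Bochner_Integration.integral_sum)
  have iS: "integrable M S"
    by (rule integrable_const_bound[where B="real (card I)"]) (auto intro!: AE_I2 dest: Sb)
  have iS2: "integrable M (\<lambda>\<omega>. (S \<omega>)^2)"
    by (rule integrable_const_bound[where B="real (card I)^2"]) (auto intro!: AE_I2 power_mono dest: Sb)
  have ES2: "expectation (\<lambda>\<omega>. (S \<omega>)^2) \<le> \<mu>^2 + \<mu>"
    unfolding S_def \<mu>_def by (rule second_moment_sum[OF fin ind wb])
  have iD: "integrable M (\<lambda>\<omega>. (S \<omega> - \<mu>)^2)"
  proof (rule integrable_const_bound[where B="(real (card I) + \<bar>\<mu>\<bar>)^2"])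
    show "AE x in M. norm ((S x - \<mu>)^2) \<le> (real (card I) + \<bar>\<mu>\<bar>)^2"
    proof (rule AE_I2)
      fix x assume "x \<in> space M"
      then have "\<bar>S x - \<mu>\<bar> \<le> real (card I) + \<bar>\<mu>\<bar>" using Sb[of x] by linarith
      then have "\<bar>S x - \<mu>\<bar>^2 \<le> (real (card I) + \<bar>\<mu>\<bar>)^2" by (intro power_mono) auto
      then show "norm ((S x - \<mu>)^2) \<le> (real (card I) + \<bar>\<mu>\<bar>)^2" by simp
    qed
  qed simp
  have "expectation (\<lambda>\<omega>. (S \<omega> - \<mu>)^2) = expectation (\<lambda>\<omega>. (S \<omega>)^2 - 2 * \<mu> * S \<omega> + \<mu>^2)"
    by (simp add: power2_diff algebra_simps)
  also have "\<dots> = expectation (\<lambda>\<omega>. (S \<omega>)^2) - 2 * \<mu> * expectation S + \<mu>^2"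
    using iS iS2 by (simp add: prob_space)
  finally have Var: "expectation (\<lambda>\<omega>. (S \<omega> - \<mu>)^2) \<le> \<mu>"
    using ES ES2 by (simp add: power2_eq_square)
  show ?thesis
  proof (cases "\<mu> \<le> 8")
    case True
    then show ?thesis unfolding \<mu>_def by (smt (verit) powr_ge_zero)
  next
    case False
    then have mupos: "\<mu> > 0" by simp
    define c where "c = (\<mu>/2) powr (1/q)"
    have ip: "integrable M (\<lambda>\<omega>. (S \<omega>) powr (1/q))"
      by (rule integrable_const_bound[where B="1 + real (card I)"])
         (auto intro!: AE_I2 dest: Sb, smt (verit) powr_le_1_plus q Sb)
    have "expectation (\<lambda>\<omega>. c * (1 - (S \<omega> - \<mu>)^2 * (4/\<mu>^2))) \<le> expectation (\<lambda>\<omega>. (S \<omega>) powr (1/q))"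
      by (rule integral_mono) (use iD ip pointwise_conc[OF _ mupos q] Sb in \<open>auto simp: c_def\<close>)
    also have "\<dots> \<le> 1" using E1 unfolding S_def .
    finally have "c * (1 - expectation (\<lambda>\<omega>. (S \<omega> - \<mu>)^2) * (4/\<mu>^2)) \<le> 1"
      using iD by (simp add: prob_space right_diff_distrib)
    moreover have "expectation (\<lambda>\<omega>. (S \<omega> - \<mu>)^2) * (4/\<mu>^2) \<le> \<mu> * (4/\<mu>^2)"
      using Var by (intro mult_right_mono) auto
    moreover have "\<mu> * (4/\<mu>^2) \<le> 1/2" using False by (simp add: power2_eq_square field_simps)
    moreover have "c \<ge> 0" unfolding c_def by simp
    ultimately have "c * (1/2) \<le> 1"
    proof -
      fix tt :: real
      assume a: "c * (1 - tt) \<le> 1" "tt \<le> \<mu> * (4/\<mu>^2)" "\<mu> * (4/\<mu>^2) \<le> 1/2" "c \<ge> 0"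
      then have "c * (1/2) \<le> c * (1 - tt)" by (intro mult_left_mono) auto
      then show ?thesis using a by linarith
    qed
    then have "(\<mu>/2) powr (1/q) \<le> 2" unfolding c_def by simp
    then have "\<mu>/2 \<le> 2 powr q" using powr_inv_le[of "\<mu>/2" 2 q] mupos q by simp
    then have "\<mu> \<le> 2 powr (q+1)" by (simp add: powr_add)
    then show ?thesis unfolding \<mu>_def by simp
  qed
qed

theorem mainTheorem13:
  fixes P :: "'a measure"
    and X :: "nat \<Rightarrow> nat \<Rightarrow> 'a \<Rightarrow> real"
    and m n :: nat and J :: "nat \<Rightarrow> nat set" and q M :: real
  assumes "prob_space P"
    and meas: "\<And>i j. i \<in> {1..m} \<Longrightarrow> j \<in> {1..n} \<Longrightarrow> X i j \<in> borel_measurable P"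
    and nonneg: "\<And>i j \<omega>. i \<in> {1..m} \<Longrightarrow> j \<in> {1..n} \<Longrightarrow> \<omega> \<in> space P \<Longrightarrow> X i j \<omega> \<ge> 0"
    and indep: "prob_space.indep_vars P (\<lambda>j. Pi\<^sub>M {1..m} (\<lambda>_. borel))
                  (\<lambda>j \<omega>. \<lambda>i\<in>{1..m}. X i j \<omega>) {1..n}"
    and q: "q \<ge> 1" and Mpos: "M > 0"
    and asg: "is_assignment m n J"
    and bound: "(\<integral>\<^sup>+ \<omega>. ennreal ((\<Sum>i\<in>{1..m}. (\<Sum>j\<in>J i. Yv X m J j \<omega>) powr q) powr (1 / q)) \<partial>P)
                  \<le> ennreal M"
  shows "(\<Sum>j\<in>{1..n}. \<integral>\<^sup>+ \<omega>. ennreal (Ytr X m J M j \<omega> powr q) \<partial>P)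
           \<le> ennreal ((2 powr (q + 1) + 8) * M powr q)"
proof -
  interpret prob_space P by fact
  define mo where "mo j = machine_of m J j" for j
  have mo: "\<And>j. j \<in> {1..n} \<Longrightarrow> mo j \<in> {1..m} \<and> j \<in> J (mo j)"
    unfolding mo_def using asg_machine[OF asg] by blast
  have mY[measurable]: "\<And>j. j \<in> {1..n} \<Longrightarrow> Yv X m J j \<in> borel_measurable P"
    unfolding Yv_def using meas mo unfolding mo_def by blast
  have Y0: "\<And>j \<omega>. j \<in> {1..n} \<Longrightarrow> \<omega> \<in> space P \<Longrightarrow> 0 \<le> Yv X m J j \<omega>"
    unfolding Yv_def using nonneg mo unfolding mo_def by blast
  have mT[measurable]: "\<And>j. j \<in> {1..n} \<Longrightarrow> Ytr X m J M j \<in> borel_measurable P"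
    unfolding Ytr_def[abs_def] using mY by measurable
  have Tb: "\<And>j \<omega>. j \<in> {1..n} \<Longrightarrow> \<omega> \<in> space P \<Longrightarrow> 0 \<le> Ytr X m J M j \<omega> \<and> Ytr X m J M j \<omega> \<le> M
      \<and> Ytr X m J M j \<omega> \<le> Yv X m J j \<omega>"
    unfolding Ytr_def using Y0 Mpos by auto
  define Mq where "Mq = M powr q"
  have Mq: "Mq > 0" unfolding Mq_def using Mpos by simp
  define w where "w j \<omega> = Ytr X m J M j \<omega> powr q / Mq" for j \<omega>
  have mw[measurable]: "\<And>j. j \<in> {1..n} \<Longrightarrow> w j \<in> borel_measurable P"
    unfolding w_def[abs_def] using mT by measurable
  have wb: "\<And>j \<omega>. j \<in> {1..n} \<Longrightarrow> \<omega> \<in> space P \<Longrightarrow> 0 \<le> w j \<omega> \<and> w j \<omega> \<le> 1"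
  proof -
    fix j \<omega> assume a: "j \<in> {1..n}" "\<omega> \<in> space P"
    have "Ytr X m J M j \<omega> powr q \<le> Mq" unfolding Mq_def
      by (rule powr_mono2) (use Tb[OF a] q in auto)
    then show "0 \<le> w j \<omega> \<and> w j \<omega> \<le> 1" unfolding w_def using Mq by simp
  qed
  define g where "g j v = (if v (mo j) \<le> M then v (mo j) else 0) powr q / Mq" for j and v :: "nat \<Rightarrow> real"
  have mg: "g j \<in> borel_measurable (Pi\<^sub>M {1..m} (\<lambda>_. borel))" if "j \<in> {1..n}" for j
  proof -
    have [measurable]: "(\<lambda>v. v (mo j)) \<in> borel_measurable (Pi\<^sub>M {1..m} (\<lambda>_. borel))"
      using mo[OF that] by (intro measurable_component_singleton) auto
    show ?thesis unfolding g_def[abs_def] by measurable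
  qed
  have indw: "indep_vars (\<lambda>_. borel) w {1..n}"
  proof -
    have "indep_vars (\<lambda>_. borel) (\<lambda>j \<omega>. g j (\<lambda>i\<in>{1..m}. X i j \<omega>)) {1..n}"
      by (rule indep_vars_compose2[OF indep mg])
    moreover have "\<And>j. j \<in> {1..n} \<Longrightarrow> (\<lambda>\<omega>. g j (\<lambda>i\<in>{1..m}. X i j \<omega>)) = w j"
      using mo unfolding g_def w_def Ytr_def Yv_def mo_def by auto
    ultimately show ?thesis by (subst indep_vars_cong[where Y="\<lambda>j \<omega>. g j (\<lambda>i\<in>{1..m}. X i j \<omega>)"]) auto
  qed
  define F where "F \<omega> = (\<Sum>i\<in>{1..m}. (\<Sum>j\<in>J i. Yv X m J j \<omega>) powr q) powr (1 / q)" for \<omega>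
  define W where "W \<omega> = (\<Sum>j\<in>{1..n}. Ytr X m J M j \<omega> powr q)" for \<omega>
  have W0: "\<And>\<omega>. 0 \<le> W \<omega>" unfolding W_def by (simp add: sum_nonneg)
  have WF: "W \<omega> powr (1/q) \<le> F \<omega>" if om: "\<omega> \<in> space P" for \<omega>
  proof -
    have "W \<omega> \<le> (\<Sum>j\<in>{1..n}. Yv X m J j \<omega> powr q)"
      unfolding W_def by (intro sum_mono powr_mono2) (use Tb om q in auto)
    also have "\<dots> = (\<Sum>i\<in>{1..m}. \<Sum>j\<in>J i. Yv X m J j \<omega> powr q)" by (rule asg_sum[OF asg])
    also have "\<dots> \<le> (\<Sum>i\<in>{1..m}. (\<Sum>j\<in>J i. Yv X m J j \<omega>) powr q)"
    proof (rule sum_mono)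
      fix i assume i: "i \<in> {1..m}"
      have sub: "J i \<subseteq> {1..n}" using asg i unfolding is_assignment_def by blast
      show "(\<Sum>j\<in>J i. Yv X m J j \<omega> powr q) \<le> (\<Sum>j\<in>J i. Yv X m J j \<omega>) powr q"
        by (rule powr_sum_le) (use sub finite_subset Y0 om q in auto)
    qed
    finally show ?thesis unfolding F_def by (intro powr_mono2) (use W0 q in auto)
  qed
  have sw: "(\<Sum>j\<in>{1..n}. w j \<omega>) powr (1/q) = W \<omega> powr (1/q) / M" for \<omega>
  proof -
    have "(\<Sum>j\<in>{1..n}. w j \<omega>) = W \<omega> / Mq" unfolding w_def W_def by (simp add: sum_divide_distrib)
    moreover have "Mq powr (1/q) = M" unfolding Mq_def using Mpos q by (simp add: powr_powr)
    ultimately show ?thesis using W0 Mq by (simp add: powr_divide)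
  qed
  have mW[measurable]: "W \<in> borel_measurable P" unfolding W_def using mT by measurable
  have Wb: "W \<omega> powr (1/q) \<le> 1 + real n * Mq" if "\<omega> \<in> space P" for \<omega>
  proof -
    have "W \<omega> \<le> (\<Sum>j\<in>{1..n}. Mq)" unfolding W_def Mq_def
      by (intro sum_mono powr_mono2) (use Tb that q in auto)
    then show ?thesis using powr_le_1_plus[OF W0 q, of \<omega>] by simp
  qed
  have iW: "integrable P (\<lambda>\<omega>. W \<omega> powr (1/q))"
    by (rule integrable_const_bound[where B="1 + real n * Mq"]) (auto intro!: AE_I2 Wb)
  have "ennreal (expectation (\<lambda>\<omega>. W \<omega> powr (1/q))) = (\<integral>\<^sup>+\<omega>. ennreal (W \<omega> powr (1/q)) \<partial>P)"
    by (rule nn_integral_eq_integral[OF iW, symmetric]) auto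
  also have "\<dots> \<le> (\<integral>\<^sup>+\<omega>. ennreal (F \<omega>) \<partial>P)"
    by (rule nn_integral_mono) (auto intro!: ennreal_leI WF)
  also have "\<dots> \<le> ennreal M" using bound unfolding F_def .
  finally have EW: "expectation (\<lambda>\<omega>. W \<omega> powr (1/q)) \<le> M" using Mpos by simp
  have E1: "expectation (\<lambda>\<omega>. (\<Sum>j\<in>{1..n}. w j \<omega>) powr (1/q)) \<le> 1"
    unfolding sw using EW Mpos by simp
  have key: "(\<Sum>j\<in>{1..n}. expectation (w j)) \<le> 2 powr (q+1) + 8"
    by (rule key_bound[OF _ indw wb q E1]) auto
  have iT: "integrable P (\<lambda>\<omega>. Ytr X m J M j \<omega> powr q)" if j: "j \<in> {1..n}" for j
  proof (rule integrable_const_bound[where B=Mq])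
    show "AE x in P. norm (Ytr X m J M j x powr q) \<le> Mq"
      by (rule AE_I2) (use Tb[OF j] q in \<open>auto simp: Mq_def intro!: powr_mono2\<close>)
  qed (use j in simp)
  have "(\<Sum>j\<in>{1..n}. \<integral>\<^sup>+ \<omega>. ennreal (Ytr X m J M j \<omega> powr q) \<partial>P)
      = (\<Sum>j\<in>{1..n}. ennreal (expectation (\<lambda>\<omega>. Ytr X m J M j \<omega> powr q)))"
    by (intro sum.cong refl nn_integral_eq_integral iT) auto
  also have "\<dots> = ennreal (\<Sum>j\<in>{1..n}. expectation (\<lambda>\<omega>. Ytr X m J M j \<omega> powr q))"
    by (rule sum_ennreal) auto
  also have "(\<Sum>j\<in>{1..n}. expectation (\<lambda>\<omega>. Ytr X m J M j \<omega> powr q)) = Mq * (\<Sum>j\<in>{1..n}. expectation (w j))"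
    unfolding w_def using Mq by (simp add: sum_distrib_left)
  also have "Mq * (\<Sum>j\<in>{1..n}. expectation (w j)) \<le> (2 powr (q + 1) + 8) * M powr q"
    using key Mq unfolding Mq_def by (simp add: mult.commute mult_left_mono)
  finally show ?thesis by (simp add: ennreal_leI)
qed

end
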